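(* Let $n\in\{2,6,10,\dots\}$ and let $p_n$ denote the minimum length of an increasing path of $f_n$ from the origin to a local maximum of $f_n$. Then $p_2=2$ and $p_{n+4}\ge 2p_n$ for all $n\in\{2,6,10,\dots\}$.
   Context: For $n\in\{2,6,10,\dots\}$ define polynomials $f_n$ in variables $x_1,\dots,x_n$ (evaluated on $\{0,1\}^n$) recursively. Set $f_2(x_1,x_2):=x_1+x_2$. For $n\in\{2,6,10,\dots\}$, write $\mathbf{x}=(x_1,\dots,x_n)$, $S:=\sum_{i=1}^n x_i$, let $M_n:=\max_{\{0,1\}^n} f_n-\min_{\{0,1\}^n} f_n+1$, and define $f_{n+4}(\mathbf{x},x_{n+1},x_{n+2},x_{n+3},x_{n+4}) := f_n(\mathbf{x}) - M_n n^2 x_{n+1} + M_n(n+1) S x_{n+1} - x_{n+2} - 2M_n n S x_{n+2} + 2M_n n(n+2) x_{n+1}x_{n+2} - 4 S x_{n+3} + 2x_{n+1}x_{n+3} + 2x_{n+2}x_{n+3} - 3x_{n+3} + (M_n(n-1)+4) S x_{n+4} + 6M_n n^2 x_{n+3}x_{n+4} - 5M_n n^2 x_{n+4}$. For a function $f:\{0,1\}^m\to\mathbb{R}$, an increasing path is a sequence of vertices $v_0,\dots,v_k$ of $\{0,1\}^m$ such that consecutive vertices differ in exactly one coordinate and $f(v_{j+1})>f(v_j)$ for all $j$; its length is $k$. A local maximum is a vertex no neighbor of which has strictly larger value. *)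

theory Defs
  imports Main
begin

text \<open>Vertices of the cube {0,1}^m, coordinates indexed 0..m-1 (paper's x_1..x_m),
  represented extensionally (zero outside {0..<m}).\<close>
definition cube :: "nat \<Rightarrow> (nat \<Rightarrow> int) set" where
  "cube m = {x. (\<forall>i<m. x i \<in> {0,1}) \<and> (\<forall>i\<ge>m. x i = 0)}"

text \<open>fk k is f_n for n = 4k+2. Coordinates x_{n+1},...,x_{n+4} are x n,...,x (n+3).\<close>
primrec fk :: "nat \<Rightarrow> (nat \<Rightarrow> int) \<Rightarrow> int" where
  "fk 0 = (\<lambda>x. x 0 + x 1)"
| "fk (Suc k) =
    (let g = fk k; n = 4*k+2; N = int n;
         M = Max (g ` cube n) - Min (g ` cube n) + 1
     in (\<lambda>x. let S = (\<Sum>i<n. x i); a = x n; b = x (n+1); c = x (n+2); d = x (n+3) in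
           g x - M * N^2 * a + M * (N+1) * S * a - b - 2 * M * N * S * b
           + 2 * M * N * (N+2) * a * b - 4 * S * c + 2 * a * c + 2 * b * c - 3 * c
           + (M * (N - 1) + 4) * S * d + 6 * M * N^2 * c * d - 5 * M * N^2 * d))"

definition f :: "nat \<Rightarrow> (nat \<Rightarrow> int) \<Rightarrow> int" where
  "f n = fk ((n - 2) div 4)"

definition adj :: "nat \<Rightarrow> (nat \<Rightarrow> int) \<Rightarrow> (nat \<Rightarrow> int) \<Rightarrow> bool" where
  "adj m v w \<longleftrightarrow> v \<in> cube m \<and> w \<in> cube m \<and> card {i. v i \<noteq> w i} = 1"

text \<open>An increasing path given as the nonempty list of its vertices v_0,...,v_k; its length is k.\<close>
definition increasing_path :: "nat \<Rightarrow> ((nat \<Rightarrow> int) \<Rightarrow> int) \<Rightarrow> (nat \<Rightarrow> int) list \<Rightarrow> bool" where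
  "increasing_path m g vs \<longleftrightarrow> vs \<noteq> [] \<and> set vs \<subseteq> cube m \<and>
     (\<forall>j. j + 1 < length vs \<longrightarrow> adj m (vs ! j) (vs ! (j+1)) \<and> g (vs ! j) < g (vs ! (j+1)))"

definition local_max :: "nat \<Rightarrow> ((nat \<Rightarrow> int) \<Rightarrow> int) \<Rightarrow> (nat \<Rightarrow> int) \<Rightarrow> bool" where
  "local_max m g v \<longleftrightarrow> v \<in> cube m \<and> (\<forall>w. adj m v w \<longrightarrow> g w \<le> g v)"

definition p :: "nat \<Rightarrow> nat" where
  "p n = Min {length vs - 1 | vs. increasing_path n (f n) vs \<and> hd vs = (\<lambda>_. 0)
                                   \<and> local_max n (f n) (last vs)}"

end

theory Submission imports Defs begin

declare fk.simps(2)[simp del]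

definition ones :: "nat \<Rightarrow> nat \<Rightarrow> int" where "ones m = (\<lambda>i. if i < m then 1 else 0)"
definition xp :: "nat \<Rightarrow> (nat \<Rightarrow> int) \<Rightarrow> nat \<Rightarrow> int" where "xp n v = (\<lambda>i. if i < n then v i else 0)"
definition Sx :: "nat \<Rightarrow> (nat \<Rightarrow> int) \<Rightarrow> int" where "Sx n v = (\<Sum>i<n. v i)"

lemma cube_finite: "finite (cube m)"
proof -
  have "cube m \<subseteq> (\<lambda>A i. if i \<in> A then 1 else 0) ` Pow {..<m}"
  proof
    fix x assume x: "x \<in> cube m"
    have "x = (\<lambda>i. if i \<in> {i. i < m \<and> x i = 1} then 1 else 0)"
      using x by (auto simp: cube_def fun_eq_iff) (metis insert_iff not_le singletonD)
    then show "x \<in> (\<lambda>A i. if i \<in> A then 1 else 0) ` Pow {..<m}" by blast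
  qed
  then show ?thesis by (rule finite_subset) auto
qed

lemma zero_cube: "(\<lambda>_. 0) \<in> cube m" by (simp add: cube_def)
lemma ones_cube: "ones m \<in> cube m" by (simp add: cube_def ones_def)

lemma cube_vals: "v \<in> cube m \<Longrightarrow> i < m \<Longrightarrow> v i = 0 \<or> v i = 1"
  by (auto simp: cube_def)
lemma cube_out: "v \<in> cube m \<Longrightarrow> \<not> i < m \<Longrightarrow> v i = 0"
  by (auto simp: cube_def)

lemma cube_01: "v \<in> cube m \<Longrightarrow> 0 \<le> v i \<and> v i \<le> 1"
  by (cases "i < m") (auto dest: cube_vals cube_out)

lemma upd_cube: "v \<in> cube m \<Longrightarrow> i < m \<Longrightarrow> v(i := 1 - v i) \<in> cube m"
  by (auto simp: cube_def)

lemma adj_I: assumes "v \<in> cube m" "i < m" shows "adj m v (v(i := 1 - v i))"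
proof -
  have "v i \<noteq> 1 - v i" using cube_vals[OF assms] by auto
  then have "{j. v j \<noteq> (v(i := 1 - v i)) j} = {i}" by auto
  then show ?thesis using assms upd_cube by (simp add: adj_def)
qed

lemma adj_E: assumes "adj m v w" obtains i where "i < m" "w = v(i := 1 - v i)" "v \<in> cube m" "w \<in> cube m"
proof -
  have c: "v \<in> cube m" "w \<in> cube m" "card {i. v i \<noteq> w i} = 1" using assms by (auto simp: adj_def)
  then obtain i where i: "{i. v i \<noteq> w i} = {i}" by (metis card_1_singletonE)
  then have eq: "\<And>j. j \<noteq> i \<Longrightarrow> v j = w j" and ne: "v i \<noteq> w i" by auto
  have "i < m" using ne c cube_out by metis
  then have "w i = 1 - v i" using ne cube_vals[OF c(1)] cube_vals[OF c(2)] by force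
  then have "w = v(i := 1 - v i)" using eq by (auto simp: fun_eq_iff)
  then show ?thesis using that \<open>i < m\<close> c by blast
qed

lemma sum_upd: fixes i n :: nat assumes "i < n" shows "(\<Sum>j<n. (v(i := t)) j) = (\<Sum>j<n. v j) - v i + (t::int)"
proof -
  have "(\<Sum>j<n. (v(i := t)) j) = (v(i := t)) i + (\<Sum>j\<in>{..<n} - {i}. (v(i := t)) j)"
    using assms by (simp add: sum.remove[OF finite_lessThan, of i])
  also have "(\<Sum>j\<in>{..<n} - {i}. (v(i := t)) j) = (\<Sum>j\<in>{..<n} - {i}. v j)" by (rule sum.cong) auto
  also have "(\<Sum>j<n. v j) = v i + (\<Sum>j\<in>{..<n} - {i}. v j)"
    using assms by (simp add: sum.remove[OF finite_lessThan, of i])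
  ultimately show ?thesis by simp
qed

lemma Sx_bounds: assumes "v \<in> cube m" "n \<le> m" shows "0 \<le> Sx n v" "Sx n v \<le> int n"
proof -
  have h: "\<And>i. i < n \<Longrightarrow> 0 \<le> v i \<and> v i \<le> 1" using cube_01[OF assms(1)] by blast
  show "0 \<le> Sx n v" unfolding Sx_def by (rule sum_nonneg) (use h in auto)
  have "Sx n v \<le> (\<Sum>i<n. 1)" unfolding Sx_def by (rule sum_mono) (use h in auto)
  then show "Sx n v \<le> int n" by simp
qed

lemma Sx_full: assumes "v \<in> cube m" "n \<le> m" "Sx n v = int n" "i < n" shows "v i = 1"
proof -
  have h: "\<And>i. i < n \<Longrightarrow> 0 \<le> v i \<and> v i \<le> 1" using cube_01[OF assms(1)] by blast
  have "(\<Sum>i<n. 1 - v i) = 0" using assms(3) by (simp add: Sx_def sum_subtractf)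
  then have "\<forall>i\<in>{..<n}. 1 - v i = 0" by (subst sum_nonneg_eq_0_iff[symmetric]) (use h in auto)
  then show ?thesis using assms(4) by auto
qed

lemma Sx_empty: assumes "v \<in> cube m" "n \<le> m" "Sx n v = 0" "i < n" shows "v i = 0"
proof -
  have h: "\<And>i. i < n \<Longrightarrow> 0 \<le> v i \<and> v i \<le> 1" using cube_01[OF assms(1)] by blast
  have "\<forall>i\<in>{..<n}. v i = 0" using assms(3) unfolding Sx_def by (subst sum_nonneg_eq_0_iff[symmetric]) (use h in auto)
  then show ?thesis using assms(4) by auto
qed

lemma xp_cube: "v \<in> cube m \<Longrightarrow> n \<le> m \<Longrightarrow> xp n v \<in> cube n"
  by (auto simp: cube_def xp_def)

lemma fk_local: "(\<And>i. i < 4*k+2 \<Longrightarrow> v i = w i) \<Longrightarrow> fk k v = fk k w"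
proof (induction k arbitrary: v w)
  case 0
  then show ?case by simp
next
  case (Suc k)
  have a: "fk k v = fk k w" by (rule Suc.IH) (use Suc.prems in simp)
  have b: "(\<Sum>i<4*k+2. v i) = (\<Sum>i<4*k+2. w i)" using Suc.prems by (intro sum.cong) auto
  have c: "v (4*k+2) = w (4*k+2)" "v (4*k+2+1) = w (4*k+2+1)" "v (4*k+2+2) = w (4*k+2+2)" "v (4*k+2+3) = w (4*k+2+3)"
    using Suc.prems by auto
  show ?case by (simp only: fk.simps Let_def a b c)
qed

lemma fk_xp: "fk k (xp (4*k+2) v) = fk k v"
  by (rule fk_local) (simp add: xp_def)

definition Mk :: "nat \<Rightarrow> int" where
  "Mk k = Max (fk k ` cube (4*k+2)) - Min (fk k ` cube (4*k+2)) + 1"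

definition Phi :: "int \<Rightarrow> int \<Rightarrow> int \<Rightarrow> int \<Rightarrow> int \<Rightarrow> int \<Rightarrow> int \<Rightarrow> int" where
  "Phi M N S a b c d = - M * N^2 * a + M * (N+1) * S * a - b - 2 * M * N * S * b
           + 2 * M * N * (N+2) * a * b - 4 * S * c + 2 * a * c + 2 * b * c - 3 * c
           + (M * (N - 1) + 4) * S * d + 6 * M * N^2 * c * d - 5 * M * N^2 * d"

definition PhiL :: "int \<Rightarrow> int \<Rightarrow> int \<Rightarrow> int \<Rightarrow> int \<Rightarrow> int \<Rightarrow> int \<Rightarrow> int \<Rightarrow> int \<Rightarrow> int" where
  "PhiL P Q R T s a b c d = a*(R + T - Q) - b - 2*T*b + 2*a*b*(Q + 2*P) - 4*s*c + 2*a*c + 2*b*c - 3*c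
     + d*(T - R + 4*s) + 6*c*d*Q - 5*d*Q"

lemma Phi_PhiL: "Phi M N s a b c d = PhiL (M*N) (M*N*N) (M*s) (M*N*s) s a b c d"
  by (simp add: Phi_def PhiL_def power2_eq_square algebra_simps)

lemma Phi0: "Phi M N s 0 0 0 0 = 0" by (simp add: Phi_def)
lemma Phi1: "Phi M N s 1 1 1 1 = 2*M*N^2 + 4*M*N" by (simp add: Phi_def algebra_simps power2_eq_square)

lemma Phi_succ: "Phi M N (s+1) a b c d - Phi M N s a b c d = a*(M + M*N) - 2*b*(M*N) - 4*c + d*(M*N - M + 4)"
  by (simp add: Phi_def power2_eq_square algebra_simps)

lemma fk_Suc: "fk (Suc k) v = fk k (xp (4*k+2) v) + Phi (Mk k) (int (4*k+2)) (Sx (4*k+2) v)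
   (v (4*k+2)) (v (4*k+3)) (v (4*k+4)) (v (4*k+5))"
  unfolding fk.simps Let_def fk_xp Phi_def Mk_def Sx_def
  by (simp add: algebra_simps numeral_eq_Suc)

lemma Mk_props: "1 \<le> Mk k" "x \<in> cube (4*k+2) \<Longrightarrow> y \<in> cube (4*k+2) \<Longrightarrow> fk k x - fk k y < Mk k"
proof -
  let ?A = "fk k ` cube (4*k+2)"
  have fin: "finite ?A" using cube_finite by simp
  have ne: "fk k (\<lambda>_. 0) \<in> ?A" using zero_cube by blast
  have "Min ?A \<le> Max ?A" using Min_le[OF fin ne] Max_ge[OF fin ne] by linarith
  then show "1 \<le> Mk k" by (simp add: Mk_def)
  assume "x \<in> cube (4*k+2)" "y \<in> cube (4*k+2)"
  then have "fk k x \<le> Max ?A" "Min ?A \<le> fk k y" using fin by auto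
  then show "fk k x - fk k y < Mk k" by (simp add: Mk_def)
qed

definition invc :: "int \<Rightarrow> int \<Rightarrow> int \<times> int \<times> int \<times> int \<Rightarrow> bool" where
  "invc N s t \<longleftrightarrow> t = (0,0,0,0) \<or> (t = (1,0,0,0) \<and> s = N) \<or> t = (1,1,0,0)
      \<or> (t = (1,1,1,0) \<and> s = 0) \<or> t = (1,1,1,1)"

definition phase :: "int \<times> int \<times> int \<times> int \<Rightarrow> nat" where
  "phase t = (if t = (0,0,0,0) then 0 else if t = (1,0,0,0) then 1 else if t = (1,1,0,0) then 2
     else if t = (1,1,1,0) then 3 else 4)"

definition flips :: "int \<times> int \<times> int \<times> int \<Rightarrow> (int \<times> int \<times> int \<times> int) set" where
  "flips t = (case t of (a,b,c,d) \<Rightarrow> {(1-a,b,c,d), (a,1-b,c,d), (a,b,1-c,d), (a,b,c,1-d)})"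

lemma ctl_step_L:
  fixes M N s P Q R T :: int
  assumes h: "M \<ge> 1" "N \<ge> 2" "0 \<le> s" "s \<le> N" "P \<ge> 2*M" "Q \<ge> 2*P" "0 \<le> R" "R \<le> P" "0 \<le> T" "T \<le> Q" "N \<le> P"
    and h1: "s \<le> N - 1 \<Longrightarrow> T \<le> Q - P \<and> R \<le> P - M"
    and h2: "s = N \<Longrightarrow> T = Q \<and> R = P"
    and inv: "invc N s (a,b,c,d)" and fl: "(a',b',c',d') \<in> flips (a,b,c,d)"
    and lt: "PhiL P Q R T s a b c d < PhiL P Q R T s a' b' c' d'"
  shows "invc N s (a',b',c',d') \<and> phase (a',b',c',d') = Suc (phase (a,b,c,d))
     \<and> (phase (a,b,c,d) = 0 \<longrightarrow> s = N) \<and> (phase (a,b,c,d) = 3 \<longrightarrow> s = 0)"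
proof -
  have c1: "s = N \<or> s \<le> N - 1" using h by linarith
  from inv fl lt c1 h h1 h2 show ?thesis
    unfolding invc_def flips_def
    apply (elim disjE conjE)
    apply (simp_all add: phase_def)
    apply (elim disjE; simp add: PhiL_def; linarith)+
    done
qed

lemma prod_facts:
  fixes M N s :: int
  assumes "M \<ge> 1" "N \<ge> 2" "0 \<le> s" "s \<le> N"
  shows "M*N \<ge> 2*M" "M*N*N \<ge> 2*(M*N)" "0 \<le> M*s" "M*s \<le> M*N" "0 \<le> M*N*s" "M*N*s \<le> M*N*N" "N \<le> M*N"
    "s \<le> N - 1 \<Longrightarrow> M*N*s \<le> M*N*N - M*N \<and> M*s \<le> M*N - M"
    "s = N \<Longrightarrow> M*N*s = M*N*N \<and> M*s = M*N"
    "s = 0 \<Longrightarrow> M*N*s = 0 \<and> M*s = 0"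
proof -
  show "M*N \<ge> 2*M" using assms by (simp add: mult_left_mono)
  have "M*N \<ge> 0" using assms by simp
  then show "M*N*N \<ge> 2*(M*N)" using assms by (metis mult.commute mult_left_mono)
  show "0 \<le> M*s" using assms by simp
  show "M*s \<le> M*N" using assms by (simp add: mult_left_mono)
  show "0 \<le> M*N*s" using assms by simp
  show "M*N*s \<le> M*N*N" using assms \<open>M*N \<ge> 0\<close> by (simp add: mult_left_mono)
  show "N \<le> M*N" using assms by (simp add: mult_right_mono[of 1 M N, simplified])
  assume "s \<le> N - 1"
  then have "M*N*s \<le> M*N*(N-1)" "M*s \<le> M*(N-1)" using assms \<open>M*N \<ge> 0\<close> by (simp_all add: mult_left_mono)
  then show "M*N*s \<le> M*N*N - M*N \<and> M*s \<le> M*N - M" by (simp add: algebra_simps)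
next
  show "s = N \<Longrightarrow> M*N*s = M*N*N \<and> M*s = M*N" by simp
  show "s = 0 \<Longrightarrow> M*N*s = 0 \<and> M*s = 0" by simp
qed

lemma ctl_step:
  fixes M N s :: int
  assumes h: "M \<ge> 1" "N \<ge> 2" "0 \<le> s" "s \<le> N"
    and inv: "invc N s (a,b,c,d)" and fl: "(a',b',c',d') \<in> flips (a,b,c,d)"
    and lt: "Phi M N s a b c d < Phi M N s a' b' c' d'"
  shows "invc N s (a',b',c',d') \<and> phase (a',b',c',d') = Suc (phase (a,b,c,d))
     \<and> (phase (a,b,c,d) = 0 \<longrightarrow> s = N) \<and> (phase (a,b,c,d) = 3 \<longrightarrow> s = 0)"
  using ctl_step_L[OF h prod_facts(1-7)[OF h] prod_facts(8)[OF h] prod_facts(9)[OF h] inv fl] lt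
  unfolding Phi_PhiL by blast

lemma improve_L:
  fixes M N s P Q R T :: int
  assumes h: "M \<ge> 1" "N \<ge> 2" "P \<ge> 2*M" "Q \<ge> 2*P"
    and h2: "s = N \<Longrightarrow> T = Q \<and> R = P"
    and h3: "s = 0 \<Longrightarrow> T = 0 \<and> R = 0"
  shows "s = N \<Longrightarrow> PhiL P Q R T s 0 0 0 0 < PhiL P Q R T s 1 0 0 0"
    "s = N \<Longrightarrow> PhiL P Q R T s 1 0 0 0 < PhiL P Q R T s 1 1 0 0"
    "s = 0 \<Longrightarrow> PhiL P Q R T s 1 1 0 0 < PhiL P Q R T s 1 1 1 0"
    "s = 0 \<Longrightarrow> PhiL P Q R T s 1 1 1 0 < PhiL P Q R T s 1 1 1 1"
  using assms by (auto simp: PhiL_def)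

lemma improve:
  fixes M N s :: int
  assumes h: "M \<ge> 1" "N \<ge> 2" "0 \<le> s" "s \<le> N"
  shows "s = N \<Longrightarrow> Phi M N s 0 0 0 0 < Phi M N s 1 0 0 0"
    "s = N \<Longrightarrow> Phi M N s 1 0 0 0 < Phi M N s 1 1 0 0"
    "s = 0 \<Longrightarrow> Phi M N s 1 1 0 0 < Phi M N s 1 1 1 0"
    "s = 0 \<Longrightarrow> Phi M N s 1 1 1 0 < Phi M N s 1 1 1 1"
  unfolding Phi_PhiL
  using improve_L[OF h(1,2) prod_facts(1,2)[OF h] prod_facts(9)[OF h] prod_facts(10)[OF h]] by auto

definition ctl :: "nat \<Rightarrow> (nat \<Rightarrow> int) \<Rightarrow> int \<times> int \<times> int \<times> int" where
  "ctl n v = (v n, v (n+1), v (n+2), v (n+3))"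

lemma fk_Suc': "n = 4*k+2 \<Longrightarrow> fk (Suc k) v = fk k (xp n v) + Phi (Mk k) (int n) (Sx n v)
   (fst (ctl n v)) (fst (snd (ctl n v))) (fst (snd (snd (ctl n v)))) (snd (snd (snd (ctl n v))))"
  using fk_Suc[of k v] by (simp add: ctl_def numeral_eq_Suc)

lemma step:
  assumes n: "n = 4*k+2"
    and inv: "invc (int n) (Sx n v) (ctl n v)" and ad: "adj (n+4) v w" and lt: "fk (Suc k) v < fk (Suc k) w"
  shows "invc (int n) (Sx n w) (ctl n w) \<and>
    ((ctl n w = ctl n v \<and> adj n (xp n v) (xp n w) \<and> (phase (ctl n v) \<in> {0,4} \<longrightarrow> fk k (xp n v) < fk k (xp n w)))
     \<or> (phase (ctl n w) = Suc (phase (ctl n v)) \<and> xp n w = xp n v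
         \<and> (phase (ctl n v) = 0 \<longrightarrow> Sx n v = int n) \<and> (phase (ctl n v) = 3 \<longrightarrow> Sx n v = 0)))"
proof -
  obtain i where i: "i < n+4" "w = v(i := 1 - v i)" and vc: "v \<in> cube (n+4)" and wc: "w \<in> cube (n+4)"
    using adj_E[OF ad] by metis
  obtain a b c d where abcd: "ctl n v = (a,b,c,d)" by (cases "ctl n v") auto
  define M where "M = Mk k"
  define N where "N = int n"
  define s where "s = Sx n v"
  have M1: "M \<ge> 1" using Mk_props(1) M_def by simp
  have N2: "N \<ge> 2" using n N_def by simp
  have s0: "0 \<le> s" "s \<le> N" using Sx_bounds[OF vc, of n] s_def N_def by auto
  have MN: "M*N \<ge> 2*M" using prod_facts(1)[OF M1 N2 s0] .
  have Fv: "fk (Suc k) v = fk k (xp n v) + Phi M N s a b c d" using fk_Suc'[OF n, of v] abcd M_def N_def s_def by simp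
  show ?thesis
  proof (cases "i < n")
    case True
    have xw: "xp n w = (xp n v)(i := 1 - xp n v i)" using i True by (auto simp: xp_def fun_eq_iff)
    have xvc: "xp n v \<in> cube n" using xp_cube[OF vc] by simp
    have adjx: "adj n (xp n v) (xp n w)" unfolding xw by (rule adj_I[OF xvc True])
    have cw: "ctl n w = ctl n v" using i True by (simp add: ctl_def)
    have sw: "Sx n w = s - v i + (1 - v i)" using i sum_upd[OF True] by (simp add: Sx_def s_def)
    have Fw: "fk (Suc k) w = fk k (xp n w) + Phi M N (Sx n w) a b c d" using fk_Suc'[OF n, of w] abcd cw M_def N_def by simp
    have gd: "fk k (xp n v) - fk k (xp n w) < M" "fk k (xp n w) - fk k (xp n v) < M"
      using Mk_props(2)[of "xp n v" k "xp n w"] Mk_props(2)[of "xp n w" k "xp n v"] xvc xp_cube[OF wc, of n] n M_def by auto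
    have vi: "v i = 0 \<or> v i = 1" using cube_vals[OF vc] i by simp
    have ps: "Phi M N (Sx n w) a b c d - Phi M N s a b c d =
       (if v i = 0 then a*(M + M*N) - 2*b*(M*N) - 4*c + d*(M*N - M + 4)
        else - (a*(M + M*N) - 2*b*(M*N) - 4*c + d*(M*N - M + 4)))"
    proof (cases "v i = 0")
      case True
      then show ?thesis using sw Phi_succ[of M N s a b c d] by simp
    next
      case False
      then have "v i = 1" using vi by simp
      then show ?thesis using sw Phi_succ[of M N "s - 1" a b c d] by simp
    qed
    have inv': "invc N s (a,b,c,d)" using inv abcd N_def s_def by simp
    have lt': "fk k (xp n v) + Phi M N s a b c d < fk k (xp n w) + Phi M N (Sx n w) a b c d"
      using lt Fv Fw by simp
    from inv' consider (c0) "(a,b,c,d) = (0,0,0,0)" | (c1) "(a,b,c,d) = (1,0,0,0)" "s = N"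
      | (c2) "(a,b,c,d) = (1,1,0,0)" | (c3) "(a,b,c,d) = (1,1,1,0)" "s = 0" | (c4) "(a,b,c,d) = (1,1,1,1)"
      unfolding invc_def by blast
    then show ?thesis
    proof cases
      case c0
      then have z4: "a = 0" "b = 0" "c = 0" "d = 0" by auto
      have "Phi M N (Sx n w) a b c d = Phi M N s a b c d" unfolding z4 Phi0 ..
      then have "fk k (xp n v) < fk k (xp n w)" using lt' by simp
      then show ?thesis using c0 cw adjx abcd inv N_def s_def by (auto simp: invc_def phase_def)
    next
      case c1
      then have "v i = 1" using Sx_full[OF vc, of n i] True s_def N_def by simp
      then have "Phi M N (Sx n w) a b c d - Phi M N s a b c d = - M - M*N" using ps c1 by simp
      then have False using lt' gd MN M1 by linarith
      then show ?thesis ..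
    next
      case c2
      then show ?thesis using cw adjx abcd by (auto simp: invc_def phase_def)
    next
      case c3
      then have "v i = 0" using Sx_empty[OF vc, of n i] True s_def by simp
      then have "Phi M N (Sx n w) a b c d - Phi M N s a b c d = M - M*N - 4" using ps c3 by simp
      then have False using lt' gd MN M1 by linarith
      then show ?thesis ..
    next
      case c4
      then have z4: "a = 1" "b = 1" "c = 1" "d = 1" by auto
      have "Phi M N (Sx n w) a b c d = Phi M N s a b c d" unfolding z4 Phi1 ..
      then have "fk k (xp n v) < fk k (xp n w)" using lt' by simp
      moreover have "ctl n w = (1,1,1,1)" "ctl n v = (1,1,1,1)" using cw abcd c4 by simp_all
      ultimately show ?thesis using adjx by (simp add: invc_def phase_def)
    qed
  next
    case False
    have xw: "xp n w = xp n v" using i False by (auto simp: xp_def fun_eq_iff)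
    have sw: "Sx n w = s" unfolding Sx_def s_def using i False by (intro sum.cong) auto
    obtain a' b' c' d' where abcd': "ctl n w = (a',b',c',d')" by (cases "ctl n w") auto
    have fl: "(a',b',c',d') \<in> flips (a,b,c,d)"
    proof -
      have "i = n \<or> i = n+1 \<or> i = n+2 \<or> i = n+3" using i False by linarith
      then show ?thesis
      proof (elim disjE)
        assume "i = n" then have "ctl n w = (1-a,b,c,d)" using abcd i(2) by (simp add: ctl_def)
        then show ?thesis using abcd' by (simp add: flips_def)
      next
        assume "i = n+1" then have "ctl n w = (a,1-b,c,d)" using abcd i(2) by (simp add: ctl_def)
        then show ?thesis using abcd' by (simp add: flips_def)
      next
        assume "i = n+2" then have "ctl n w = (a,b,1-c,d)" using abcd i(2) by (simp add: ctl_def)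
        then show ?thesis using abcd' by (simp add: flips_def)
      next
        assume "i = n+3" then have "ctl n w = (a,b,c,1-d)" using abcd i(2) by (simp add: ctl_def)
        then show ?thesis using abcd' by (simp add: flips_def)
      qed
    qed
    have Fw: "fk (Suc k) w = fk k (xp n v) + Phi M N s a' b' c' d'" using fk_Suc'[OF n, of w] abcd' xw sw M_def N_def by simp
    have lt': "Phi M N s a b c d < Phi M N s a' b' c' d'" using lt Fv Fw by simp
    have inv': "invc N s (a,b,c,d)" using inv abcd N_def s_def by simp
    have "invc N s (a',b',c',d') \<and> phase (a',b',c',d') = Suc (phase (a,b,c,d))
     \<and> (phase (a,b,c,d) = 0 \<longrightarrow> s = N) \<and> (phase (a,b,c,d) = 3 \<longrightarrow> s = 0)"
      by (rule ctl_step[OF M1 N2 s0 inv' fl lt'])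
    then show ?thesis using abcd abcd' xw sw N_def s_def by simp
  qed
qed

lemma F_xflip: assumes n: "n = 4*k+2" and i: "i < n"
  shows "fk (Suc k) (v(i:=t)) = fk k ((xp n v)(i:=t)) + Phi (Mk k) (int n) (Sx n v - v i + t)
   (fst (ctl n v)) (fst (snd (ctl n v))) (fst (snd (snd (ctl n v)))) (snd (snd (snd (ctl n v))))"
proof -
  have "xp n (v(i:=t)) = (xp n v)(i:=t)" using i by (auto simp: xp_def fun_eq_iff)
  moreover have "ctl n (v(i:=t)) = ctl n v" using i by (simp add: ctl_def)
  moreover have "Sx n (v(i:=t)) = Sx n v - v i + t" using sum_upd[OF i] by (simp add: Sx_def)
  ultimately show ?thesis using fk_Suc'[OF n, of "v(i:=t)"] by simp
qed

lemma F_cflip: assumes n: "n = 4*k+2" and i: "n \<le> i"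
  shows "fk (Suc k) (v(i:=t)) = fk k (xp n v) + Phi (Mk k) (int n) (Sx n v)
   (fst (ctl n (v(i:=t)))) (fst (snd (ctl n (v(i:=t))))) (fst (snd (snd (ctl n (v(i:=t)))))) (snd (snd (snd (ctl n (v(i:=t))))))"
proof -
  have "xp n (v(i:=t)) = xp n v" using i by (auto simp: xp_def fun_eq_iff)
  moreover have "Sx n (v(i:=t)) = Sx n v" unfolding Sx_def using i by (intro sum.cong) auto
  ultimately show ?thesis using fk_Suc'[OF n, of "v(i:=t)"] by simp
qed

lemma lmax:
  assumes n: "n = 4*k+2"
    and inv: "invc (int n) (Sx n v) (ctl n v)" and lm: "local_max (n+4) (fk (Suc k)) v"
  shows "phase (ctl n v) \<in> {0,4} \<and> local_max n (fk k) (xp n v) \<and> (phase (ctl n v) = 0 \<longrightarrow> Sx n v \<noteq> int n)"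
proof -
  have vc: "v \<in> cube (n+4)" using lm by (simp add: local_max_def)
  have le: "\<And>i. i < n+4 \<Longrightarrow> fk (Suc k) (v(i := 1 - v i)) \<le> fk (Suc k) v"
    using lm adj_I[OF vc] by (simp add: local_max_def)
  obtain a b c d where abcd: "ctl n v = (a,b,c,d)" by (cases "ctl n v") auto
  have cv: "v n = a" "v (n+1) = b" "v (n+2) = c" "v (n+3) = d" using abcd by (auto simp: ctl_def)
  define M where "M = Mk k"
  define N where "N = int n"
  define s where "s = Sx n v"
  have M1: "M \<ge> 1" using Mk_props(1) M_def by simp
  have N2: "N \<ge> 2" using n N_def by simp
  have s0: "0 \<le> s" "s \<le> N" using Sx_bounds[OF vc, of n] s_def N_def by auto
  have MN: "M*N \<ge> 2*M" using prod_facts(1)[OF M1 N2 s0] .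
  have Fv: "fk (Suc k) v = fk k (xp n v) + Phi M N s a b c d" using fk_Suc'[OF n, of v] abcd M_def N_def s_def by simp
  have xvc: "xp n v \<in> cube n" using xp_cube[OF vc] by simp
  have Fx: "\<And>i. i < n \<Longrightarrow> fk (Suc k) (v(i := 1 - v i)) = fk k ((xp n v)(i := 1 - v i)) + Phi M N (s - v i + (1 - v i)) a b c d"
    using F_xflip[OF n] abcd M_def N_def s_def by simp
  have Fc: "\<And>j t. n \<le> j \<Longrightarrow> fk (Suc k) (v(j := t)) = fk k (xp n v) + Phi M N s
     (fst (ctl n (v(j:=t)))) (fst (snd (ctl n (v(j:=t))))) (fst (snd (snd (ctl n (v(j:=t)))))) (snd (snd (snd (ctl n (v(j:=t))))))"
    using F_cflip[OF n] M_def N_def s_def by simp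
  have lmx: "local_max n (fk k) (xp n v)" if const: "\<And>s'. Phi M N s' a b c d = Phi M N s a b c d"
  proof -
    have "fk k y \<le> fk k (xp n v)" if adjh: "adj n (xp n v) y" for y
    proof -
      obtain i where i: "i < n" "y = (xp n v)(i := 1 - xp n v i)" using adj_E[OF adjh] by metis
      have "xp n v i = v i" using i by (simp add: xp_def)
      then have "fk (Suc k) (v(i := 1 - v i)) = fk k y + Phi M N s a b c d" using Fx[OF i(1)] const i by simp
      then show ?thesis using le[of i] i Fv by simp
    qed
    then show ?thesis using xvc by (simp add: local_max_def)
  qed
  from inv consider (c0) "(a,b,c,d) = (0,0,0,0)" | (c1) "(a,b,c,d) = (1,0,0,0)" "s = N"
      | (c2) "(a,b,c,d) = (1,1,0,0)" | (c3) "(a,b,c,d) = (1,1,1,0)" "s = 0" | (c4) "(a,b,c,d) = (1,1,1,1)"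
      unfolding invc_def abcd N_def s_def by blast
  then show ?thesis
  proof cases
    case c0
    then have z4: "a = 0" "b = 0" "c = 0" "d = 0" by auto
    have "local_max n (fk k) (xp n v)" by (rule lmx) (simp add: z4 Phi0)
    moreover have "s \<noteq> N"
    proof
      assume sN: "s = N"
      have "ctl n (v(n := 1 - v n)) = (1,0,0,0)" using cv z4 by (simp add: ctl_def)
      then have "fk (Suc k) (v(n := 1 - v n)) = fk k (xp n v) + Phi M N s 1 0 0 0" using Fc[of n] by simp
      moreover have "Phi M N s 0 0 0 0 < Phi M N s 1 0 0 0" using improve(1)[OF M1 N2 s0 sN] .
      ultimately show False using le[of n] Fv z4 by simp
    qed
    ultimately show ?thesis using c0 abcd s_def N_def by (simp add: phase_def)
  next
    case c1
    then have z4: "a = 1" "b = 0" "c = 0" "d = 0" by auto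
    have "ctl n (v(n+1 := 1 - v (n+1))) = (1,1,0,0)" using cv z4 by (simp add: ctl_def)
    then have "fk (Suc k) (v(n+1 := 1 - v (n+1))) = fk k (xp n v) + Phi M N s 1 1 0 0" using Fc[of "n+1"] by simp
    moreover have "Phi M N s 1 0 0 0 < Phi M N s 1 1 0 0" using improve(2)[OF M1 N2 s0 c1(2)] .
    ultimately have False using le[of "n+1"] Fv z4 by simp
    then show ?thesis ..
  next
    case c2
    then have z4: "a = 1" "b = 1" "c = 0" "d = 0" by auto
    show ?thesis
    proof (cases "s = 0")
      case True
      have "ctl n (v(n+2 := 1 - v (n+2))) = (1,1,1,0)" using cv z4 by (simp add: ctl_def)
      then have "fk (Suc k) (v(n+2 := 1 - v (n+2))) = fk k (xp n v) + Phi M N s 1 1 1 0" using Fc[of "n+2"] by simp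
      moreover have "Phi M N s 1 1 0 0 < Phi M N s 1 1 1 0" using improve(3)[OF M1 N2 s0 True] .
      ultimately have False using le[of "n+2"] Fv z4 by simp
      then show ?thesis ..
    next
      case False
      have "\<exists>i<n. v i \<noteq> 0" using Sx_empty[OF vc, of n] False s_def
        by (metis Sx_def le_add1 sum.neutral lessThan_iff)
      then obtain i where i0: "i < n" "v i \<noteq> 0" by blast
      then have i: "i < n" "v i = 1" using cube_vals[OF vc, of i] by auto
      have ps: "Phi M N s a b c d - Phi M N (s - 1) a b c d = M - M*N"
        using Phi_succ[of M N "s - 1" a b c d] z4 by simp
      have gd: "fk k (xp n v) - fk k ((xp n v)(i := 0)) < M"
        using Mk_props(2)[of "xp n v" k "(xp n v)(i := 0)"] xvc upd_cube[OF xvc i(1)] i n M_def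
        by (simp add: xp_def)
      have "fk (Suc k) (v(i := 1 - v i)) = fk k ((xp n v)(i := 0)) + Phi M N (s - 1) a b c d"
        using Fx[OF i(1)] i by simp
      then have False using le[of i] i Fv ps gd MN by simp
      then show ?thesis ..
    qed
  next
    case c3
    then have z4: "a = 1" "b = 1" "c = 1" "d = 0" by auto
    have "ctl n (v(n+3 := 1 - v (n+3))) = (1,1,1,1)" using cv z4 by (simp add: ctl_def)
    then have "fk (Suc k) (v(n+3 := 1 - v (n+3))) = fk k (xp n v) + Phi M N s 1 1 1 1" using Fc[of "n+3"] by simp
    moreover have "Phi M N s 1 1 1 0 < Phi M N s 1 1 1 1" using improve(4)[OF M1 N2 s0 c3(2)] .
    ultimately have False using le[of "n+3"] Fv z4 by simp
    then show ?thesis ..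
  next
    case c4
    then have z4: "a = 1" "b = 1" "c = 1" "d = 1" by auto
    have "local_max n (fk k) (xp n v)" by (rule lmx) (simp add: z4 Phi1)
    then show ?thesis using c4 abcd by (simp add: phase_def)
  qed
qed

lemma phase_le: "phase t \<le> 4" by (simp add: phase_def)

lemma xp_ones: "xp n (ones (n+4)) = ones n" by (auto simp: xp_def ones_def fun_eq_iff)
lemma ctl_ones: "ctl n (ones (n+4)) = (1,1,1,1)" by (simp add: ctl_def ones_def)
lemma Sx_ones: "Sx n (ones m) = int n" if "n \<le> m" using that by (simp add: Sx_def ones_def)
lemma Sx_xp: "Sx n (xp n v) = Sx n v" by (simp add: Sx_def xp_def)
lemma xp_zero: "xp n (\<lambda>_. 0) = (\<lambda>_. 0)" by (simp add: xp_def fun_eq_iff)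

lemma xp_empty: assumes "v \<in> cube m" "n \<le> m" "Sx n v = 0" shows "xp n v = (\<lambda>_. 0)"
  using Sx_empty[OF assms] by (auto simp: xp_def fun_eq_iff)
lemma xp_full: assumes "v \<in> cube m" "n \<le> m" "Sx n v = int n" shows "xp n v = ones n"
  using Sx_full[OF assms] by (auto simp: xp_def ones_def fun_eq_iff)

lemma ones_lmax:
  assumes n: "n = 4*k+2" and J: "local_max n (fk k) (ones n)"
  shows "local_max (n+4) (fk (Suc k)) (ones (n+4))"
proof -
  define M where "M = Mk k"
  define N where "N = int n"
  have M1: "M \<ge> 1" using Mk_props(1) M_def by simp
  have N2: "N \<ge> 2" using n N_def by simp
  have sN: "Sx n (ones (n+4)) = N" using Sx_ones[of n "n+4"] N_def by simp
  have s0: "0 \<le> N" "N \<le> N" using N2 by auto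
  have Fv: "fk (Suc k) (ones (n+4)) = fk k (ones n) + Phi M N N 1 1 1 1"
    using fk_Suc'[OF n, of "ones (n+4)"] xp_ones ctl_ones sN M_def N_def by simp
  have "fk (Suc k) w \<le> fk (Suc k) (ones (n+4))" if adjh: "adj (n+4) (ones (n+4)) w" for w
  proof -
    obtain i where i: "i < n+4" "w = (ones (n+4))(i := 1 - ones (n+4) i)" using adj_E[OF adjh] by metis
    show ?thesis
    proof (cases "i < n")
      case True
      have o: "ones (n+4) i = 1" "ones n i = 1" using True by (auto simp: ones_def)
      have "fk (Suc k) w = fk k ((ones n)(i := 0)) + Phi M N (N - 1) 1 1 1 1"
        using F_xflip[OF n True, of "ones (n+4)" 0] i o xp_ones ctl_ones sN M_def N_def by simp
      moreover have "adj n (ones n) ((ones n)(i := 0))" using adj_I[OF ones_cube True] o by simp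
      then have "fk k ((ones n)(i := 0)) \<le> fk k (ones n)" using J by (simp add: local_max_def)
      ultimately show ?thesis using Fv by (simp add: Phi1)
    next
      case False
      obtain a' b' c' d' where abcd': "ctl n w = (a',b',c',d')" by (cases "ctl n w") auto
      have fl: "(a',b',c',d') \<in> flips (1,1,1,1)"
      proof -
        have "i = n \<or> i = n+1 \<or> i = n+2 \<or> i = n+3" using i False by linarith
        then show ?thesis using abcd' i by (auto simp: ctl_def flips_def ones_def)
      qed
      have Fw: "fk (Suc k) w = fk k (ones n) + Phi M N N a' b' c' d'"
        using F_cflip[OF n, of i "ones (n+4)"] False i abcd' xp_ones sN M_def N_def by simp
      have inv: "invc N N (1,1,1,1)" by (simp add: invc_def)
      show ?thesis
      proof (rule ccontr)
        assume "\<not> ?thesis"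
        then have "Phi M N N 1 1 1 1 < Phi M N N a' b' c' d'" using Fv Fw by simp
        from ctl_step[OF M1 N2 s0 inv fl this] phase_le[of "(a',b',c',d')"] show False
          by (simp add: phase_def)
      qed
    qed
  qed
  then show ?thesis using ones_cube by (simp add: local_max_def)
qed

lemma slice_path:
  assumes ab: "a < b" "b \<le> length vs"
    and st: "\<And>j. a \<le> j \<Longrightarrow> j+1 < b \<Longrightarrow> adj m (h (vs!j)) (h (vs!(j+1))) \<and> g (h (vs!j)) < g (h (vs!(j+1)))"
    and cb: "\<And>j. a \<le> j \<Longrightarrow> j < b \<Longrightarrow> h (vs!j) \<in> cube m"
  shows "increasing_path m g (map (\<lambda>j. h (vs!j)) [a..<b])"
    "hd (map (\<lambda>j. h (vs!j)) [a..<b]) = h (vs!a)"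
    "last (map (\<lambda>j. h (vs!j)) [a..<b]) = h (vs!(b-1))"
    "length (map (\<lambda>j. h (vs!j)) [a..<b]) = b - a"
proof -
  let ?xs = "map (\<lambda>j. h (vs!j)) [a..<b]"
  have A: "?xs \<noteq> []" using ab by simp
  have B: "set ?xs \<subseteq> cube m" using cb by auto
  have C: "\<forall>j. j + 1 < length ?xs \<longrightarrow> adj m (?xs ! j) (?xs ! (j+1)) \<and> g (?xs ! j) < g (?xs ! (j+1))"
  proof (intro allI impI)
    fix j assume j: "j + 1 < length ?xs"
    then have j2: "a \<le> a + j" "a + j + 1 < b" by auto
    have "?xs ! j = h (vs!(a+j))" "?xs ! (j+1) = h (vs!(a+j+1))" using j by simp_all
    then show "adj m (?xs ! j) (?xs ! (j+1)) \<and> g (?xs ! j) < g (?xs ! (j+1))" using st[OF j2] by simp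
  qed
  show "increasing_path m g ?xs" unfolding increasing_path_def using A B C by blast
next
  show "hd (map (\<lambda>j. h (vs!j)) [a..<b]) = h (vs!a)" using ab by (simp add: hd_map upt_conv_Cons)
  show "last (map (\<lambda>j. h (vs!j)) [a..<b]) = h (vs!(b-1))" using ab by (simp add: last_map)
  show "length (map (\<lambda>j. h (vs!j)) [a..<b]) = b - a" by simp
qed

lemma mono_idx:
  assumes "\<And>j. j+1 < L \<Longrightarrow> (ph::nat\<Rightarrow>nat) j \<le> ph (j+1)" "j \<le> j'" "j' < L"
  shows "ph j \<le> ph j'"
  using assms(2,3)
proof (induction j')
  case 0 then show ?case by simp
next
  case (Suc j')
  show ?case
  proof (cases "j = Suc j'")
    case False
    then have "ph j \<le> ph j'" using Suc by simp
    also have "ph j' \<le> ph (Suc j')" using assms(1)[of j'] Suc.prems by simp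
    finally show ?thesis .
  qed simp
qed

lemma ip_props: assumes "increasing_path m g vs"
  shows "vs \<noteq> []" "\<And>j. j < length vs \<Longrightarrow> vs!j \<in> cube m"
    "\<And>j. j+1 < length vs \<Longrightarrow> adj m (vs!j) (vs!(j+1)) \<and> g (vs!j) < g (vs!(j+1))"
  using assms by (auto simp: increasing_path_def)

lemma main_step:
  assumes n: "n = 4*k+2"
    and R: "\<And>ws. increasing_path n (fk k) ws \<Longrightarrow> hd ws = (\<lambda>_. 0) \<Longrightarrow> local_max n (fk k) (last ws) \<Longrightarrow> last ws = ones n"
    and ip: "increasing_path (n+4) (fk (Suc k)) vs" and h0: "hd vs = (\<lambda>_. 0)"
    and lm: "local_max (n+4) (fk (Suc k)) (last vs)"
  shows "last vs = ones (n+4) \<and> (\<exists>ws1 ws2. increasing_path n (fk k) ws1 \<and> hd ws1 = (\<lambda>_. 0) \<and> last ws1 = ones n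
     \<and> increasing_path n (fk k) ws2 \<and> hd ws2 = (\<lambda>_. 0) \<and> last ws2 = ones n
     \<and> length ws1 + length ws2 \<le> length vs)"
proof -
  define L where "L = length vs"
  define V where "V j = vs ! j" for j
  have L0: "0 < L" using ip_props(1)[OF ip] L_def by simp
  have V0: "V 0 = (\<lambda>_. 0)" using h0 ip_props(1)[OF ip] V_def by (simp add: hd_conv_nth)
  have VL: "V (L-1) = last vs" using ip_props(1)[OF ip] V_def L_def by (simp add: last_conv_nth)
  have Vc: "\<And>j. j < L \<Longrightarrow> V j \<in> cube (n+4)" using ip_props(2)[OF ip] V_def L_def by simp
  have Vs: "\<And>j. j+1 < L \<Longrightarrow> adj (n+4) (V j) (V (j+1)) \<and> fk (Suc k) (V j) < fk (Suc k) (V (j+1))"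
    using ip_props(3)[OF ip] V_def L_def by simp
  define I where "I j \<longleftrightarrow> invc (int n) (Sx n (V j)) (ctl n (V j))" for j
  have Iall: "\<And>j. j < L \<Longrightarrow> I j"
  proof -
    fix j show "j < L \<Longrightarrow> I j"
    proof (induction j)
      case 0 then show ?case using V0 by (simp add: I_def invc_def Sx_def ctl_def)
    next
      case (Suc j)
      then show ?case using step[OF n _ conjunct1[OF Vs[of j]] conjunct2[OF Vs[of j]]] by (simp add: I_def)
    qed
  qed
  define ph where "ph j = phase (ctl n (V j))" for j
  have ST: "\<And>j. j+1 < L \<Longrightarrow> (ctl n (V (j+1)) = ctl n (V j) \<and> adj n (xp n (V j)) (xp n (V (j+1)))
        \<and> (ph j \<in> {0,4} \<longrightarrow> fk k (xp n (V j)) < fk k (xp n (V (j+1)))))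
     \<or> (ph (j+1) = Suc (ph j) \<and> xp n (V (j+1)) = xp n (V j)
         \<and> (ph j = 0 \<longrightarrow> Sx n (V j) = int n) \<and> (ph j = 3 \<longrightarrow> Sx n (V j) = 0))"
    using step[OF n Iall[unfolded I_def] conjunct1[OF Vs] conjunct2[OF Vs]] ph_def by simp
  have STs: "\<And>j. j+1 < L \<Longrightarrow> ph (j+1) = ph j \<Longrightarrow> adj n (xp n (V j)) (xp n (V (j+1)))
        \<and> (ph j \<in> {0,4} \<longrightarrow> fk k (xp n (V j)) < fk k (xp n (V (j+1))))"
    using ST by fastforce
  have STd: "\<And>j. j+1 < L \<Longrightarrow> ph (j+1) \<noteq> ph j \<Longrightarrow> ph (j+1) = Suc (ph j) \<and> xp n (V (j+1)) = xp n (V j)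
         \<and> (ph j = 0 \<longrightarrow> Sx n (V j) = int n) \<and> (ph j = 3 \<longrightarrow> Sx n (V j) = 0)"
    using ST ph_def by fastforce
  have phm1: "\<And>j. j+1 < L \<Longrightarrow> ph j \<le> ph (j+1)" using STs STd by (metis le_refl lessI less_imp_le)
  have phm: "\<And>j j'. j \<le> j' \<Longrightarrow> j' < L \<Longrightarrow> ph j \<le> ph j'"
  proof -
    fix j j' assume "j \<le> j'" "j' < L"
    then show "ph j \<le> ph j'" by (rule mono_idx[of L ph j j', rotated]) (rule phm1)
  qed
  have ph0: "ph 0 = 0" using V0 by (simp add: ph_def ctl_def phase_def)
  have xc: "\<And>j. j < L \<Longrightarrow> xp n (V j) \<in> cube n" by (metis Vc xp_cube le_add1)
  have LM: "phase (ctl n (V (L-1))) \<in> {0,4} \<and> local_max n (fk k) (xp n (V (L-1)))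
        \<and> (phase (ctl n (V (L-1))) = 0 \<longrightarrow> Sx n (V (L-1)) \<noteq> int n)"
    using lmax[OF n Iall[of "L-1", unfolded I_def]] lm VL L0 by simp
  have ex1: "\<exists>j<L. ph j \<noteq> 0"
  proof (rule ccontr)
    assume "\<not> ?thesis"
    then have all0: "\<And>j. j < L \<Longrightarrow> ph j = 0" by blast
    let ?ws = "map (\<lambda>j. xp n (vs!j)) [0..<L]"
    have P: "increasing_path n (fk k) ?ws" "hd ?ws = xp n (vs!0)" "last ?ws = xp n (vs!(L-1))"
      using slice_path[of 0 L vs n "\<lambda>v. xp n v" "fk k"] L0 L_def STs all0 xc V_def by auto
    have "last ?ws = ones n" using R[OF P(1)] P(2,3) V0 VL LM xp_zero all0[of "L-1"] L0 V_def ph_def by simp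
    then have "Sx n (V (L-1)) = int n" using P(3) Sx_xp[of n "V (L-1)"] Sx_ones[of n n] V_def by simp
    then show False using LM all0[of "L-1"] L0 ph_def by simp
  qed
  define i1 where "i1 = (LEAST j. j < L \<and> ph j \<noteq> 0)"
  have i1: "i1 < L" "ph i1 \<noteq> 0" using LeastI_ex[OF ex1] i1_def by auto
  have i1m: "\<And>j. j < i1 \<Longrightarrow> ph j = 0" using not_less_Least i1_def i1(1) by fastforce
  have i1p: "0 < i1" using i1 ph0 by (cases i1) auto
  have d1: "ph i1 = 1 \<and> Sx n (V (i1-1)) = int n"
    using STd[of "i1-1"] i1 i1p i1m[of "i1-1"] by simp
  let ?ws1 = "map (\<lambda>j. xp n (vs!j)) [0..<i1]"
  have P1: "increasing_path n (fk k) ?ws1" "hd ?ws1 = xp n (vs!0)" "last ?ws1 = xp n (vs!(i1-1))" "length ?ws1 = i1"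
    using slice_path[of 0 i1 vs n "\<lambda>v. xp n v" "fk k"] i1p i1 L_def STs i1m xc V_def
    by (auto simp: Suc_lessI)
  have P1': "hd ?ws1 = (\<lambda>_. 0)" "last ?ws1 = ones n"
    using P1 V0 xp_zero d1 xp_full[OF Vc[of "i1-1"], of n] i1 V_def by auto
  have "i1 \<le> L - 1" using i1 by simp
  then have "ph i1 \<le> ph (L-1)" using phm[of i1 "L-1"] L0 by simp
  then have phL: "ph (L-1) = 4" using LM d1 ph_def by auto
  have ex2: "\<exists>j<L. ph j = 4" using phL L0 by (intro exI[of _ "L-1"]) auto
  define i2 where "i2 = (LEAST j. j < L \<and> ph j = 4)"
  have i2: "i2 < L" "ph i2 = 4" using LeastI_ex[OF ex2] i2_def by auto
  have i2m: "\<And>j. j < i2 \<Longrightarrow> ph j \<noteq> 4" using not_less_Least i2_def i2(1) by fastforce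
  have i12: "i1 < i2"
  proof (rule ccontr)
    assume "\<not> i1 < i2"
    then have "ph i2 \<le> ph i1" using phm[of i2 i1] i1 by simp
    then show False using i2 d1 by simp
  qed
  have d2: "Sx n (V (i2-1)) = 0 \<and> xp n (V i2) = xp n (V (i2-1))"
    using STd[of "i2-1"] i2 i12 i2m[of "i2-1"] phase_le[of "ctl n (V (i2-1))"] ph_def by auto
  have ph4: "\<And>j. i2 \<le> j \<Longrightarrow> j < L \<Longrightarrow> ph j = 4"
    using phm[of i2] i2 phase_le ph_def by (metis le_antisym)
  let ?ws2 = "map (\<lambda>j. xp n (vs!j)) [i2..<L]"
  have P2: "increasing_path n (fk k) ?ws2" "hd ?ws2 = xp n (vs!i2)" "last ?ws2 = xp n (vs!(L-1))" "length ?ws2 = L - i2"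
    using slice_path[of i2 L vs n "\<lambda>v. xp n v" "fk k"] i2 L_def xc V_def STs ph4
    by auto
  have P2h: "hd ?ws2 = (\<lambda>_. 0)"
    using P2(2) d2 xp_empty[OF Vc[of "i2-1"], of n] i2 i12 V_def by auto
  have P2l: "last ?ws2 = ones n" using R[OF P2(1) P2h] P2(3) LM VL V_def by simp
  have lastv: "last vs = ones (n+4)"
  proof -
    have c: "ctl n (V (L-1)) = (1,1,1,1)" using Iall[of "L-1"] phL L0 by (auto simp: I_def invc_def ph_def phase_def)
    have x: "xp n (V (L-1)) = ones n" using P2l P2(3) V_def by simp
    have "V (L-1) = ones (n+4)"
    proof
      fix i
      show "V (L-1) i = ones (n+4) i"
      proof (cases "i < n")
        case True
        have "xp n (V (L-1)) i = ones n i" using x by simp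
        then show ?thesis using True by (simp add: xp_def ones_def)
      next
        case False
        then have "i = n \<or> i = n+1 \<or> i = n+2 \<or> i = n+3 \<or> n+4 \<le> i" by linarith
        then show ?thesis using c cube_out[OF Vc[of "L-1"], of i] L0 by (auto simp: ctl_def ones_def)
      qed
    qed
    then show ?thesis using VL by simp
  qed
  show ?thesis
    using lastv P1 P1' P2 P2h P2l i12 i2 L_def
    by (intro conjI exI[of _ ?ws1] exI[of _ ?ws2]) auto
qed

lemma ip_lt: assumes ip: "increasing_path m g vs" shows "i < j \<Longrightarrow> j < length vs \<Longrightarrow> g (vs!i) < g (vs!j)"
proof (induction j)
  case 0 then show ?case by simp
next
  case (Suc j)
  have st: "g (vs!j) < g (vs!Suc j)" using ip_props(3)[OF ip, of j] Suc.prems by simp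
  show ?case
  proof (cases "i = j")
    case True then show ?thesis using st by simp
  next
    case False then show ?thesis using Suc st by simp
  qed
qed

lemma ip_len: assumes ip: "increasing_path m g vs" shows "length vs \<le> card (cube m)"
proof -
  have "distinct vs" unfolding distinct_conv_nth
  proof (intro allI impI)
    fix i j assume "i < length vs" "j < length vs" "i \<noteq> j"
    then show "vs ! i \<noteq> vs ! j" using ip_lt[OF ip, of i j] ip_lt[OF ip, of j i] by (cases "i < j") auto
  qed
  then have "length vs = card (set vs)" by (simp add: distinct_card)
  also have "\<dots> \<le> card (cube m)" using ip cube_finite by (intro card_mono) (auto simp: increasing_path_def)
  finally show ?thesis .
qed

lemma ex_path: "v \<in> cube m \<Longrightarrow> \<exists>vs. increasing_path m g vs \<and> hd vs = v \<and> local_max m g (last vs)"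
proof (induction "card {w \<in> cube m. g v < g w}" arbitrary: v rule: less_induct)
  case less
  show ?case
  proof (cases "local_max m g v")
    case True
    then show ?thesis using less.prems by (intro exI[of _ "[v]"]) (auto simp: increasing_path_def)
  next
    case False
    then obtain w where w: "adj m v w" "g v < g w" using less.prems by (auto simp: local_max_def not_le)
    have wc: "w \<in> cube m" using w by (simp add: adj_def)
    have "{u \<in> cube m. g w < g u} \<subset> {u \<in> cube m. g v < g u}" using w wc by auto
    then have "card {u \<in> cube m. g w < g u} < card {u \<in> cube m. g v < g u}"
      using cube_finite by (intro psubset_card_mono) auto
    then obtain ws where ws: "increasing_path m g ws" "hd ws = w" "local_max m g (last ws)"
      using less.hyps[OF _ wc] by blast
    have ne: "ws \<noteq> []" using ws by (simp add: increasing_path_def)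
    have A: "v # ws \<noteq> []" by simp
    have B: "set (v # ws) \<subseteq> cube m" using ws less.prems by (auto simp: increasing_path_def)
    have C: "\<forall>j. j + 1 < length (v # ws) \<longrightarrow> adj m ((v # ws) ! j) ((v # ws) ! (j + 1)) \<and> g ((v # ws) ! j) < g ((v # ws) ! (j + 1))"
    proof (intro allI impI)
      fix j assume j: "j + 1 < length (v # ws)"
      show "adj m ((v # ws) ! j) ((v # ws) ! (j + 1)) \<and> g ((v # ws) ! j) < g ((v # ws) ! (j + 1))"
      proof (cases j)
        case 0 then show ?thesis using w ws(2) ne by (simp add: hd_conv_nth)
      next
        case (Suc j') then show ?thesis using ws(1) j by (simp add: increasing_path_def)
      qed
    qed
    have "increasing_path m g (v # ws)" unfolding increasing_path_def using A B C by blast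
    then show ?thesis using ws ne by (intro exI[of _ "v # ws"]) auto
  qed
qed

definition PS :: "nat \<Rightarrow> nat set" where
  "PS n = {length vs - 1 | vs. increasing_path n (f n) vs \<and> hd vs = (\<lambda>_. 0) \<and> local_max n (f n) (last vs)}"

lemma p_PS: "p n = Min (PS n)" by (simp add: p_def PS_def)

lemma PS_fin: "finite (PS n)"
proof -
  have "PS n \<subseteq> {..card (cube n)}" unfolding PS_def using ip_len by fastforce
  then show ?thesis using finite_subset by blast
qed

lemma PS_ne: "PS n \<noteq> {}"
  using ex_path[OF zero_cube, of n "f n"] unfolding PS_def by blast

lemma p_le: "increasing_path n (f n) vs \<Longrightarrow> hd vs = (\<lambda>_. 0) \<Longrightarrow> local_max n (f n) (last vs) \<Longrightarrow> p n \<le> length vs - 1"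
  unfolding p_PS by (rule Min_le[OF PS_fin]) (auto simp: PS_def)

lemma p_in: "\<exists>vs. increasing_path n (f n) vs \<and> hd vs = (\<lambda>_. 0) \<and> local_max n (f n) (last vs) \<and> p n = length vs - 1"
  using Min_in[OF PS_fin PS_ne, of n] unfolding p_PS by (auto simp: PS_def)

lemma base_lmax: "local_max 2 (fk 0) v \<longleftrightarrow> v = ones 2"
proof
  assume lm: "local_max 2 (fk 0) v"
  have vc: "v \<in> cube 2" using lm by (simp add: local_max_def)
  have "v i = 1" if i: "i < 2" for i
  proof (rule ccontr)
    assume "v i \<noteq> 1"
    then have "v i = 0" using cube_vals[OF vc i] by simp
    moreover have "fk 0 (v(i := 1 - v i)) \<le> fk 0 v" using lm adj_I[OF vc i] unfolding local_max_def by blast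
    moreover have "i = 0 \<or> i = 1" using i by auto
    ultimately show False by auto
  qed
  then show "v = ones 2" using cube_out[OF vc] by (auto simp: ones_def fun_eq_iff)
next
  assume v: "v = ones 2"
  have "fk 0 w \<le> fk 0 v" if adjh: "adj 2 v w" for w
  proof -
    obtain i where "i < 2" "w = v(i := 1 - v i)" using adj_E[OF adjh] by metis
    moreover have "i = 0 \<or> i = 1" using \<open>i < 2\<close> by auto
    ultimately show ?thesis using v by (auto simp: ones_def)
  qed
  then show "local_max 2 (fk 0) v" using v ones_cube by (simp add: local_max_def)
qed

lemma Jk: "local_max (4*k+2) (fk k) (ones (4*k+2)) \<and>
  (\<forall>ws. increasing_path (4*k+2) (fk k) ws \<and> hd ws = (\<lambda>_. 0) \<and> local_max (4*k+2) (fk k) (last ws) \<longrightarrow> last ws = ones (4*k+2))"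
proof (induction k)
  case 0
  have e: "4*(0::nat)+2 = 2" by simp
  show ?case unfolding e using base_lmax by blast
next
  case (Suc k)
  have n: "4*k+2+4 = 4 * Suc k + 2" by simp
  have A: "local_max (4*k+2+4) (fk (Suc k)) (ones (4*k+2+4))"
    using ones_lmax[of "4*k+2" k] Suc.IH by simp
  have B: "last ws = ones (4*k+2+4)" if "increasing_path (4*k+2+4) (fk (Suc k)) ws" "hd ws = (\<lambda>_. 0)"
      "local_max (4*k+2+4) (fk (Suc k)) (last ws)" for ws
    using main_step[of "4*k+2" k ws] Suc.IH that by blast
  show ?case using A B unfolding n by blast
qed

lemma base_vals: assumes ip: "increasing_path 2 (fk 0) vs" and h: "hd vs = (\<lambda>_. 0)"
  shows "j < length vs \<Longrightarrow> fk 0 (vs!j) = int j"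
proof (induction j)
  case 0 then show ?case using h ip_props(1)[OF ip] by (simp add: hd_conv_nth)
next
  case (Suc j)
  have st: "adj 2 (vs!j) (vs!Suc j)" "fk 0 (vs!j) < fk 0 (vs!Suc j)" using ip_props(3)[OF ip, of j] Suc.prems by auto
  obtain i where i: "i < 2" "vs!Suc j = (vs!j)(i := 1 - (vs!j) i)" "vs!j \<in> cube 2" using adj_E[OF st(1)] by metis
  have "(vs!j) i = 0 \<or> (vs!j) i = 1" using cube_vals[OF i(3) i(1)] .
  then have "fk 0 (vs!Suc j) = fk 0 (vs!j) + 1" using st(2) i(1,2) by (cases i) (auto simp: numeral_eq_Suc less_Suc_eq)
  then show ?case using Suc by simp
qed

lemma p2: "p 2 = 2"
proof -
  have f2: "f 2 = fk 0" by (simp add: f_def)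
  have "PS 2 = {2}"
  proof -
    have "x = 2" if xin: "x \<in> PS 2" for x
    proof -
      obtain vs where vs: "x = length vs - 1" "increasing_path 2 (fk 0) vs" "hd vs = (\<lambda>_. 0)" "local_max 2 (fk 0) (last vs)"
        using xin unfolding PS_def f2 by blast
      have ne: "vs \<noteq> []" using ip_props(1)[OF vs(2)] .
      have "last vs = ones 2" using vs(4) base_lmax by simp
      then have "fk 0 (last vs) = 2" by (simp add: ones_def)
      moreover have "fk 0 (last vs) = int (length vs - 1)" using base_vals[OF vs(2,3), of "length vs - 1"] ne by (simp add: last_conv_nth)
      ultimately show ?thesis using vs(1) by simp
    qed
    then show ?thesis using PS_ne[of 2] by blast
  qed
  then show ?thesis by (simp add: p_PS)
qed

theorem mainTheorem4:
  shows "p 2 = 2 \<and> (\<forall>n. n mod 4 = 2 \<longrightarrow> p (n + 4) \<ge> 2 * p n)"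
proof (intro conjI allI impI)
  show "p 2 = 2" by (rule p2)
  fix n :: nat assume nm: "n mod 4 = 2"
  define k where "k = (n - 2) div 4"
  have n: "n = 4*k+2" using nm k_def by presburger
  have fn: "f n = fk k" "f (n+4) = fk (Suc k)" using n by (simp_all add: f_def)
  obtain vs where vs: "increasing_path (n+4) (fk (Suc k)) vs" "hd vs = (\<lambda>_. 0)" "local_max (n+4) (fk (Suc k)) (last vs)"
     "p (n+4) = length vs - 1"
    using p_in[of "n+4"] fn by auto
  have J: "local_max n (fk k) (ones n)"
    "\<And>ws. increasing_path n (fk k) ws \<Longrightarrow> hd ws = (\<lambda>_. 0) \<Longrightarrow> local_max n (fk k) (last ws) \<Longrightarrow> last ws = ones n"
    using Jk[of k] n by auto
  obtain ws1 ws2 where w: "increasing_path n (fk k) ws1" "hd ws1 = (\<lambda>_. 0)" "last ws1 = ones n"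
     "increasing_path n (fk k) ws2" "hd ws2 = (\<lambda>_. 0)" "last ws2 = ones n"
     "length ws1 + length ws2 \<le> length vs"
    using main_step[OF n J(2) vs(1,2,3)] by blast
  have "p n \<le> length ws1 - 1" using p_le[of n ws1] w J(1) fn by simp
  moreover have "p n \<le> length ws2 - 1" using p_le[of n ws2] w J(1) fn by simp
  ultimately show "p (n + 4) \<ge> 2 * p n" using w(7) vs(4) by linarith
qed

end
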